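(* Let $d\ge2$, $A\in\mathcal C^{d-1}$, $p\in[1,\infty)$ and $C_1,C_2\in\mathcal C^d_A$. Then: (1) $\Phi_{C_1,C_2;A,p}(0)=\Phi_{C_1,C_2;A,p}(1)=0$; (2) $\Phi_{C_1,C_2;A,p}$ is continuous on $\mathbb I$, and for $p=1$ it is Lipschitz continuous with constant $2$; (3) $\Phi_{C_1,C_2;A,p}(y)\le 2\min\{y,1-y\}$ for all $y\in\mathbb I$, and this bound is sharp (attained for some $C_1,C_2\in\mathcal C^d_A$ at every $y$). Moreover, $\max_{C_1,C_2\in\mathcal C^d_A}D_{A,p}(C_1,C_2)=2^{-1/p}$.
   Context: $\mathbb I=[0,1]$, $\lambda$ Lebesgue measure. A $d$-copula $C\in\mathcal C^d$ is the distribution function on $\mathbb I^d$ of a probability measure $\mu_C$ with uniform univariate marginals; points are $(\mathbf x,y)$, $\mathbf x\in\mathbb I^{d-1}$. $C_{1:(d-1)}$ is the marginal copula of the first $d-1$ coordinates; $\mathcal C^d_A=\{C\in\mathcal C^d:C_{1:(d-1)}=A\}$ (for $d=2$, $\mu_A=\lambda$, $\mathcal C^2_A=\mathcal C^2$). $K_C$ is the Markov kernel of $C$ w.r.t. the first $d-1$ coordinates: $\mu_C(B\times F)=\int_B K_C(\mathbf x,F)\,\mathrm d\mu_{A}(\mathbf x)$ for $C\in\mathcal C^d_A$. For $C_1,C_2\in\mathcal C^d_A$ and $y\in\mathbb I$, $\Phi_{C_1,C_2;A,p}(y)=\int_{\mathbb I^{d-1}}|K_{C_1}(\mathbf x,[0,y])-K_{C_2}(\mathbf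 x,[0,y])|^p\,\mathrm d\mu_A(\mathbf x)$ and $D_{A,p}(C_1,C_2)=\big(\int_{\mathbb I}\Phi_{C_1,C_2;A,p}(y)\,\mathrm d\lambda(y)\big)^{1/p}$. *)

theory Defs
  imports "HOL-Probability.Probability"
begin

text \<open>A k-copula is represented by its probability measure mu_C on real^'k
  (k = CARD('k)); the copula itself is the distribution function of this measure.\<close>

definition copula_meas :: "(real^'k::finite) measure \<Rightarrow> bool" where
  "copula_meas \<mu> \<longleftrightarrow> sets \<mu> = sets borel \<and> prob_space \<mu> \<and>
     (\<forall>i. \<forall>t\<in>{0..1}. measure \<mu> {x. x $ i \<le> t} = t)"

text \<open>A d-copula (d = CARD('k) + 1), points written as (x, y) with x in real^'k, y real.\<close>

definition dcopula_meas :: "((real^'k::finite) \<times> real) measure \<Rightarrow> bool" where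
  "dcopula_meas \<mu> \<longleftrightarrow> sets \<mu> = sets borel \<and> prob_space \<mu> \<and>
     (\<forall>i. \<forall>t\<in>{0..1}. measure \<mu> {z. fst z $ i \<le> t} = t) \<and>
     (\<forall>t\<in>{0..1}. measure \<mu> {z. snd z \<le> t} = t)"

definition copulas_with_marginal :: "(real^'k::finite) measure \<Rightarrow> ((real^'k::finite) \<times> real) measure set" where
  "copulas_with_marginal \<mu>A = {\<mu>. dcopula_meas \<mu> \<and> distr \<mu> borel fst = \<mu>A}"

definition markov_kernel_of ::
  "(real^'k::finite) measure \<Rightarrow> ((real^'k::finite) \<times> real) measure \<Rightarrow> (real^'k \<Rightarrow> real measure) \<Rightarrow> bool" where
  "markov_kernel_of \<mu>A \<mu> K \<longleftrightarrow>
     (\<forall>x. prob_space (K x) \<and> sets (K x) = sets borel) \<and>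
     (\<forall>F\<in>sets borel. (\<lambda>x. measure (K x) F) \<in> borel_measurable borel) \<and>
     (\<forall>B\<in>sets borel. \<forall>F\<in>sets borel.
        measure \<mu> (B \<times> F) = set_lebesgue_integral \<mu>A B (\<lambda>x. measure (K x) F))"

definition Phi ::
  "(real^'k::finite) measure \<Rightarrow> (real^'k \<Rightarrow> real measure) \<Rightarrow> (real^'k \<Rightarrow> real measure) \<Rightarrow> real \<Rightarrow> real \<Rightarrow> real" where
  "Phi \<mu>A K1 K2 p y =
     (\<integral>x. \<bar>measure (K1 x) {0..y} - measure (K2 x) {0..y}\<bar> powr p \<partial>\<mu>A)"

definition Dp ::
  "(real^'k::finite) measure \<Rightarrow> (real^'k \<Rightarrow> real measure) \<Rightarrow> (real^'k \<Rightarrow> real measure) \<Rightarrow> real \<Rightarrow> real" where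
  "Dp \<mu>A K1 K2 p = (set_lebesgue_integral lborel {0..1} (\<lambda>y. Phi \<mu>A K1 K2 p y)) powr (1 / p)"

end

theory Submission
  imports Defs
begin
lemma powr_diff_le:
  fixes u v p :: real
  assumes "0 \<le> v" "v \<le> u" "u \<le> 1" "1 \<le> p"
  shows "u powr p - v powr p \<le> p * (u - v)"
proof (cases "v = u")
  case True then show ?thesis by simp
next
  case False
  then have vu: "v < u" using assms by simp
  show ?thesis
  proof (cases "v = 0")
    case True
    have "u powr p \<le> u powr 1" using assms by (intro powr_mono') auto
    also have "\<dots> \<le> p * u" using mult_right_mono[of 1 p u] assms vu by simp
    finally show ?thesis using True assms by simp
  next
    case False
    then have v0: "0 < v" using assms by simp
    have "\<And>x. v \<le> x \<Longrightarrow> x \<le> u \<Longrightarrow> ((\<lambda>z. z powr p) has_real_derivative p * x powr (p - 1)) (at x)"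
      using v0 by (auto intro!: has_real_derivative_powr)
    from MVT2[OF vu this] obtain z where z: "v < z" "z < u"
      "u powr p - v powr p = (u - v) * (p * z powr (p - 1))" by blast
    have "z powr (p - 1) \<le> 1" using z assms v0 powr_mono2[of "p - 1" z 1] by simp
    then have "(u - v) * (p * z powr (p - 1)) \<le> (u - v) * (p * 1)"
      using vu assms by (intro mult_left_mono) auto
    then show ?thesis using z by simp
  qed
qed

lemma powr_lip:
  fixes u v p :: real
  assumes "0 \<le> v" "v \<le> 1" "0 \<le> u" "u \<le> 1" "1 \<le> p"
  shows "\<bar>u powr p - v powr p\<bar> \<le> p * \<bar>u - v\<bar>"
proof (cases "v \<le> u")
  case True then show ?thesis using powr_diff_le[of v u p] assms
    by (smt (verit) powr_mono2)
next
  case False then show ?thesis using powr_diff_le[of u v p] assms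
    by (smt (verit) powr_mono2)
qed




lemma kernel_meas:
  assumes "sets M = sets borel" "markov_kernel_of M C K" "F \<in> sets borel"
  shows "(\<lambda>x. measure (K x) F) \<in> borel_measurable M"
  using assms unfolding markov_kernel_of_def
  by (metis measurable_cong_sets)

lemma kernel_bounds:
  assumes "markov_kernel_of M C K"
  shows "0 \<le> measure (K x) F" "measure (K x) F \<le> 1"
proof -
  have "prob_space (K x)" using assms unfolding markov_kernel_of_def by blast
  then show "0 \<le> measure (K x) F" "measure (K x) F \<le> 1"
    by (auto simp: prob_space.prob_le_1)
qed

lemma kernel_integrable:
  assumes "prob_space M" "sets M = sets borel" "markov_kernel_of M C K" "F \<in> sets borel"
  shows "integrable M (\<lambda>x. measure (K x) F)"
proof -
  interpret prob_space M by fact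
  show ?thesis
    by (rule integrable_const_bound[where B=1])
       (use kernel_bounds[OF assms(3)] kernel_meas[OF assms(2-4)] in auto)
qed

lemma dcop_snd_interval:
  assumes "dcopula_meas C" "0 \<le> y" "y \<le> 1"
  shows "measure C (UNIV \<times> {0..y}) = y"
proof -
  interpret prob_space C using assms unfolding dcopula_meas_def by blast
  have sC: "sets C = sets borel" using assms unfolding dcopula_meas_def by blast
  have m: "\<And>t. t\<in>{0..1} \<Longrightarrow> measure C {z. snd z \<le> t} = t" using assms unfolding dcopula_meas_def by blast
  have S1: "{z. snd z \<le> y} \<in> sets C" unfolding sC
    by (intro borel_closed closed_Collect_le continuous_intros)
  have S2: "{z. snd z < 0} \<in> sets C" unfolding sC
    by (intro borel_open open_Collect_less continuous_intros)
  have S3: "{z. snd z \<le> 0} \<in> sets C" unfolding sC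
    by (intro borel_closed closed_Collect_le continuous_intros)
  have "measure C {z. snd z < 0} \<le> measure C {z. snd z \<le> 0}"
    using S3 by (intro finite_measure_mono) auto
  also have "\<dots> = 0" using m[of 0] by simp
  finally have z: "measure C {z. snd z < 0} = 0" by (simp add: antisym)
  have eq: "UNIV \<times> {0..y} = {z. snd z \<le> y} - {z. snd z < 0}" by auto
  have sub: "{z. snd z < 0} \<subseteq> {z. snd z \<le> y}" using assms by auto
  show ?thesis unfolding eq
    using finite_measure_Diff[OF S1 S2 sub] z m[of y] assms by auto
qed

lemma kernel_integral:
  assumes "prob_space M" "sets M = sets borel" "dcopula_meas C" "markov_kernel_of M C K"
    "0 \<le> y" "y \<le> 1"
  shows "(\<integral>x. measure (K x) {0..y} \<partial>M) = y"
proof -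
  have "measure C (UNIV \<times> {0..y}) = set_lebesgue_integral M UNIV (\<lambda>x. measure (K x) {0..y})"
    using assms(4) unfolding markov_kernel_of_def by auto
  then show ?thesis using dcop_snd_interval[OF assms(3,5,6)]
    by (simp add: set_lebesgue_integral_def)
qed




locale philoc =
  fixes M :: "(real^'n) measure" and C1 C2 K1 K2 and p :: real
  assumes M: "prob_space M" "sets M = sets borel"
    and C1: "dcopula_meas C1" and C2: "dcopula_meas C2"
    and K1: "markov_kernel_of M C1 K1" and K2: "markov_kernel_of M C2 K2"
    and p: "1 \<le> p"
begin

interpretation P: prob_space M by (rule M(1))

definition "a y x = measure (K1 x) {0..y}"
definition "b y x = measure (K2 x) {0..y}"

lemma ab_bounds: "0 \<le> a y x" "a y x \<le> 1" "0 \<le> b y x" "b y x \<le> 1"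
  unfolding a_def b_def using kernel_bounds[OF K1] kernel_bounds[OF K2] by auto

lemma ab_meas: "a y \<in> borel_measurable M" "b y \<in> borel_measurable M"
  unfolding a_def b_def using kernel_meas[OF M(2) K1] kernel_meas[OF M(2) K2] by auto

lemma ab_int: "integrable M (a y)" "integrable M (b y)"
  unfolding a_def b_def using kernel_integrable[OF M K1] kernel_integrable[OF M K2] by auto

lemma ab_integral: "y \<in> {0..1} \<Longrightarrow> integral\<^sup>L M (a y) = y" "y \<in> {0..1} \<Longrightarrow> integral\<^sup>L M (b y) = y"
  unfolding a_def b_def using kernel_integral[OF M C1 K1] kernel_integral[OF M C2 K2] by auto

lemma ab_mono: "y \<le> y' \<Longrightarrow> a y x \<le> a y' x" "y \<le> y' \<Longrightarrow> b y x \<le> b y' x"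
proof -
  assume "y \<le> y'"
  have "prob_space (K1 x)" "sets (K1 x) = sets borel" "prob_space (K2 x)" "sets (K2 x) = sets borel"
    using K1 K2 unfolding markov_kernel_of_def by auto
  then show "a y x \<le> a y' x" "b y x \<le> b y' x" unfolding a_def b_def using \<open>y \<le> y'\<close>
    by (auto intro!: finite_measure.finite_measure_mono prob_space.finite_measure)
qed

definition "g y x = \<bar>a y x - b y x\<bar> powr p"

lemma Phi_eq: "Phi M K1 K2 p y = integral\<^sup>L M (g y)"
  unfolding Phi_def g_def a_def b_def by simp

lemma absab: "\<bar>a y x - b y x\<bar> \<le> 1" using ab_bounds[of y x] by auto

lemma g_bounds: "0 \<le> g y x" "g y x \<le> \<bar>a y x - b y x\<bar>"
proof -
  show "0 \<le> g y x" unfolding g_def by simp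
  have "g y x \<le> \<bar>a y x - b y x\<bar> powr 1" unfolding g_def
    using absab[of y x] p by (intro powr_mono') auto
  then show "g y x \<le> \<bar>a y x - b y x\<bar>" by simp
qed

lemma g_int: "integrable M (g y)"
proof (rule P.integrable_const_bound[where B=1])
  have "\<And>x. norm (g y x) \<le> 1" using g_bounds absab by (metis abs_of_nonneg order_trans real_norm_def)
  then show "AE x in M. norm (g y x) \<le> 1" by simp
  show "g y \<in> borel_measurable M" unfolding g_def using ab_meas by measurable
qed

lemma Phi_bound:
  assumes "y \<in> {0..1}"
  shows "0 \<le> Phi M K1 K2 p y" "Phi M K1 K2 p y \<le> 2 * min y (1 - y)"
proof -
  show "0 \<le> Phi M K1 K2 p y" unfolding Phi_eq using g_bounds by (simp add: integral_nonneg_AE)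
  have "integral\<^sup>L M (g y) \<le> integral\<^sup>L M (\<lambda>x. a y x + b y x)"
    using g_bounds[of y] ab_bounds[of y] by (intro integral_mono g_int Bochner_Integration.integrable_add ab_int)
       (smt (verit))
  also have "\<dots> = 2 * y" using ab_integral assms ab_int by simp
  finally have 1: "integral\<^sup>L M (g y) \<le> 2 * y" .
  have "integral\<^sup>L M (g y) \<le> integral\<^sup>L M (\<lambda>x. 2 - (a y x + b y x))"
    using g_bounds[of y] ab_bounds[of y] by (intro integral_mono g_int Bochner_Integration.integrable_diff
        Bochner_Integration.integrable_add ab_int) (auto, smt (verit))
  also have "\<dots> = 2 - 2 * y" using ab_integral assms ab_int P.prob_space
    by (subst Bochner_Integration.integral_diff) (auto intro!: Bochner_Integration.integrable_add)
  finally have 2: "integral\<^sup>L M (g y) \<le> 2 - 2 * y" .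
  show "Phi M K1 K2 p y \<le> 2 * min y (1 - y)" unfolding Phi_eq using 1 2 unfolding min_def by auto
qed

lemma Phi_lip_aux:
  assumes "y \<in> {0..1}" "y' \<in> {0..1}" "y \<le> y'"
  shows "\<bar>Phi M K1 K2 p y' - Phi M K1 K2 p y\<bar> \<le> 2 * p * (y' - y)"
proof -
  have pw: "\<bar>g y' x - g y x\<bar> \<le> p * ((a y' x - a y x) + (b y' x - b y x))" for x
  proof -
    have "\<bar>g y' x - g y x\<bar> \<le> p * \<bar>\<bar>a y' x - b y' x\<bar> - \<bar>a y x - b y x\<bar>\<bar>"
      unfolding g_def using absab[of y' x] absab[of y x] p by (intro powr_lip) auto
    also have "\<dots> \<le> p * ((a y' x - a y x) + (b y' x - b y x))"
      using ab_mono[OF assms(3), of x] p by (intro mult_left_mono) auto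
    finally show ?thesis .
  qed
  have "\<bar>Phi M K1 K2 p y' - Phi M K1 K2 p y\<bar> = \<bar>integral\<^sup>L M (\<lambda>x. g y' x - g y x)\<bar>"
    unfolding Phi_eq using g_int by simp
  also have "\<dots> \<le> integral\<^sup>L M (\<lambda>x. p * ((a y' x - a y x) + (b y' x - b y x)))"
    using pw by (intro integral_abs_bound_integral g_int ab_int Bochner_Integration.integrable_diff
        Bochner_Integration.integrable_add integrable_mult_right) auto
  also have "\<dots> = p * ((y' - y) + (y' - y))"
    using ab_int ab_integral assms by simp
  finally show ?thesis by (simp add: algebra_simps)
qed

lemma Phi_lip: "(2 * p)-lipschitz_on {0..1} (Phi M K1 K2 p)"
proof (rule lipschitz_onI)
  fix x y :: real assume "x \<in> {0..1}" "y \<in> {0..1}"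
  then show "dist (Phi M K1 K2 p x) (Phi M K1 K2 p y) \<le> 2 * p * dist x y"
    using Phi_lip_aux[of x y] Phi_lip_aux[of y x] unfolding dist_real_def
    by (cases "x \<le> y") (auto simp: abs_minus_commute)
next
  show "0 \<le> 2 * p" using p by simp
qed

end



lemma tent_cont: "continuous_on {0..1} (\<lambda>y::real. 2 * min y (1 - y))"
  by (intro continuous_intros)

lemma tent_set_integrable: "set_integrable lborel {0..1::real} (\<lambda>y. 2 * min y (1 - y))"
  unfolding set_integrable_def by (intro borel_integrable_compact tent_cont) auto

lemma tent_integral: "set_lebesgue_integral lborel {0..1::real} (\<lambda>y. 2 * min y (1 - y)) = 1/2"
proof -
  have h1: "((\<lambda>y::real. 2 * y) has_integral (1/2)^2 - 0^2) {0..1/2}"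
    by (rule fundamental_theorem_of_calculus) (auto intro!: derivative_eq_intros simp: has_real_derivative_iff_has_vector_derivative[symmetric])
  have h1': "((\<lambda>y::real. 2 * min y (1 - y)) has_integral 1/4) {0..1/2}"
  proof (rule has_integral_eq[rotated])
    show "((\<lambda>y::real. 2 * y) has_integral 1/4) {0..1/2}" using h1 by (simp add: power2_eq_square)
  qed (auto simp: min_def)
  have h2: "((\<lambda>y::real. 2 - 2 * y) has_integral (2 * 1 - 1^2) - (2 * (1/2) - (1/2)^2)) {1/2..1}"
    by (rule fundamental_theorem_of_calculus) (auto intro!: derivative_eq_intros simp: has_real_derivative_iff_has_vector_derivative[symmetric])
  have h2': "((\<lambda>y::real. 2 * min y (1 - y)) has_integral 1/4) {1/2..1}"
  proof (rule has_integral_eq[rotated])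
    show "((\<lambda>y::real. 2 - 2 * y) has_integral 1/4) {1/2..1}" using h2 by (simp add: power2_eq_square)
  qed (auto simp: min_def)
  have "((\<lambda>y::real. 2 * min y (1 - y)) has_integral 1/4 + 1/4) {0..1}"
    by (rule has_integral_combine[OF _ _ h1' h2']) auto
  then have hI: "((\<lambda>y::real. 2 * min y (1 - y)) has_integral 1/2) {0..1}" by simp
  have "integral {0..1::real} (\<lambda>y. 2 * min y (1 - y)) = 1/2" by (rule integral_unique[OF hI])
  then show ?thesis using set_borel_integral_eq_integral(2)[OF tent_set_integrable] by simp
qed

lemma half_powr: "1 \<le> p \<Longrightarrow> (1/2::real) powr (1/p) = 2 powr (- 1 / p)"
  by (simp add: powr_divide powr_minus_divide)

context philoc begin

lemma Phi_cont: "continuous_on {0..1} (Phi M K1 K2 p)"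
  by (rule lipschitz_on_continuous_on[OF Phi_lip])

lemma Phi_set_integrable: "set_integrable lborel {0..1::real} (Phi M K1 K2 p)"
  unfolding set_integrable_def by (intro borel_integrable_compact Phi_cont) auto

lemma Dp_bound: "Dp M K1 K2 p \<le> 2 powr (- 1 / p)"
proof -
  have le: "set_lebesgue_integral lborel {0..1::real} (Phi M K1 K2 p) \<le> 1/2"
    unfolding tent_integral[symmetric]
    by (rule set_integral_mono[OF Phi_set_integrable tent_set_integrable]) (use Phi_bound in auto)
  have ge: "0 \<le> set_lebesgue_integral lborel {0..1::real} (Phi M K1 K2 p)"
    unfolding set_lebesgue_integral_def by (rule Bochner_Integration.integral_nonneg) (use Phi_bound in \<open>auto simp: indicator_def\<close>)
  have "Dp M K1 K2 p \<le> (1/2) powr (1/p)" unfolding Dp_def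
    using le ge p by (intro powr_mono2) auto
  then show ?thesis using half_powr[OF p] by simp
qed

end



lemma cop_basic:
  assumes "copula_meas M"
  shows "prob_space M" "sets M = sets borel" "space M = UNIV"
    "\<And>i t. t \<in> {0..1} \<Longrightarrow> measure M {x. x $ i \<le> t} = t"
  using assms unfolding copula_meas_def by (auto dest: sets_eq_imp_space_eq)

lemma cop_lt:
  fixes M :: "(real^'n) measure"
  assumes A: "copula_meas M" and s: "s \<in> {0..1}"
  shows "measure M {x. x $ i < s} = s"
proof -
  interpret prob_space M using cop_basic[OF A] by blast
  have sM: "sets M = sets borel" using cop_basic[OF A] by blast
  have le: "\<And>t. {x::real^'n. x $ i \<le> t} \<in> sets M" unfolding sM
    by (intro borel_closed closed_Collect_le continuous_intros)
  have lt: "{x::real^'n. x $ i < s} \<in> sets M" unfolding sM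
    by (intro borel_open open_Collect_less continuous_intros)
  have "measure M {x. x $ i < s} \<le> measure M {x. x $ i \<le> s}"
    using le by (intro finite_measure_mono) auto
  also have "\<dots> = s" using cop_basic(4)[OF A s] by simp
  finally have 1: "measure M {x. x $ i < s} \<le> s" .
  have 2: "s \<le> measure M {x. x $ i < s}"
  proof (rule field_le_epsilon)
    fix e :: real assume e: "0 < e"
    show "s \<le> measure M {x. x $ i < s} + e"
    proof (cases "e \<le> s")
      case True
      have "s - e = measure M {x. x $ i \<le> s - e}" using cop_basic(4)[OF A, of "s - e" i] True s e by simp
      also have "\<dots> \<le> measure M {x. x $ i < s}" using lt e by (intro finite_measure_mono) auto
      finally show ?thesis by simp
    next
      case False then show ?thesis by (smt (verit) measure_nonneg)
    qed
  qed
  show ?thesis using 1 2 by simp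
qed

lemma cop_ge:
  fixes M :: "(real^'n) measure"
  assumes A: "copula_meas M" and s: "s \<in> {0..1}"
  shows "measure M {x. s \<le> x $ i} = 1 - s"
proof -
  interpret prob_space M using cop_basic[OF A] by blast
  have sM: "sets M = sets borel" using cop_basic[OF A] by blast
  have lt: "{x::real^'n. x $ i < s} \<in> sets M" unfolding sM
    by (intro borel_open open_Collect_less continuous_intros)
  have eq: "{x::real^'n. s \<le> x $ i} = space M - {x. x $ i < s}" using cop_basic(3)[OF A] by auto
  show ?thesis unfolding eq using prob_compl[OF lt] cop_lt[OF A s] by simp
qed

definition graph_meas :: "(real^'n) measure \<Rightarrow> (real^'n \<Rightarrow> real) \<Rightarrow> ((real^'n) \<times> real) measure"
  where "graph_meas M f = distr M borel (\<lambda>x. (x, f x))"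

locale graphloc =
  fixes M :: "(real^'n) measure" and f :: "real^'n \<Rightarrow> real"
  assumes A: "copula_meas M" and fc: "continuous_on UNIV f"
    and fu: "\<And>t. t \<in> {0..1} \<Longrightarrow> measure M {x. f x \<le> t} = t"
begin

lemma sM: "sets M = sets borel" and spM: "space M = UNIV" and PM: "prob_space M"
  using cop_basic[OF A] by auto

lemma f_meas: "f \<in> borel_measurable M"
  unfolding measurable_cong_sets[OF sM refl] by (rule borel_measurable_continuous_onI[OF fc])

lemma h_meas: "(\<lambda>x. (x, f x)) \<in> measurable M borel"
  unfolding measurable_cong_sets[OF sM refl]
  by (rule borel_measurable_continuous_onI) (intro continuous_intros fc)

lemma prod_sets: "B \<in> sets borel \<Longrightarrow> F \<in> sets borel \<Longrightarrow> B \<times> F \<in> sets (borel :: ((real^'n) \<times> real) measure)"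
  unfolding borel_prod[symmetric] by (rule pair_measureI) auto

lemma graph_rect: "B \<in> sets borel \<Longrightarrow> F \<in> sets borel \<Longrightarrow>
    measure (graph_meas M f) (B \<times> F) = measure M (B \<inter> {x. f x \<in> F})"
  unfolding graph_meas_def
  by (subst measure_distr[OF h_meas prod_sets]) (auto simp: spM intro: arg_cong[where f="measure M"])

lemma graph_dcop: "dcopula_meas (graph_meas M f)"
  unfolding dcopula_meas_def
proof (intro conjI ballI allI)
  show "sets (graph_meas M f) = sets borel" unfolding graph_meas_def by simp
  show "prob_space (graph_meas M f)" unfolding graph_meas_def
    by (intro prob_space.prob_space_distr PM h_meas)
  fix t :: real assume t: "t \<in> {0..1}"
  { fix i
    have "{z::(real^'n) \<times> real. fst z $ i \<le> t} \<in> sets borel"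
      by (intro borel_closed closed_Collect_le continuous_intros)
    then show "measure (graph_meas M f) {z. fst z $ i \<le> t} = t"
      unfolding graph_meas_def using cop_basic(4)[OF A t]
      by (subst measure_distr[OF h_meas]) (auto simp: spM) }
  have "{z::(real^'n) \<times> real. snd z \<le> t} \<in> sets borel"
    by (intro borel_closed closed_Collect_le continuous_intros)
  then show "measure (graph_meas M f) {z. snd z \<le> t} = t"
    unfolding graph_meas_def using fu[OF t]
    by (subst measure_distr[OF h_meas]) (auto simp: spM)
qed

lemma graph_marg: "graph_meas M f \<in> copulas_with_marginal M"
  unfolding copulas_with_marginal_def
proof (intro CollectI conjI graph_dcop)
  have "distr (graph_meas M f) borel fst = distr M borel (fst \<circ> (\<lambda>x. (x, f x)))"
    unfolding graph_meas_def by (rule distr_distr) (auto intro!: h_meas borel_measurable_continuous_onI continuous_intros)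
  also have "\<dots> = distr M borel (\<lambda>x. x)" by (simp add: comp_def)
  also have "\<dots> = M" using distr_id2[of borel M] sM by simp
  finally show "distr (graph_meas M f) borel fst = M" .
qed

lemma graph_kernel: "markov_kernel_of M (graph_meas M f) (\<lambda>x. return borel (f x))"
  unfolding markov_kernel_of_def
proof (intro conjI ballI allI)
  fix x show "prob_space (return borel (f x))" by (rule prob_space_return) simp
  show "sets (return borel (f x)) = sets borel" by simp
next
  fix F :: "real set" assume F: "F \<in> sets borel"
  have "(\<lambda>x. indicator F (f x) :: real) \<in> borel_measurable borel"
    using F borel_measurable_continuous_onI[OF fc] by measurable
  then show "(\<lambda>x. measure (return borel (f x)) F) \<in> borel_measurable borel"
    using F by (simp add: measure_return)
  fix B :: "(real^'n) set" assume B: "B \<in> sets borel"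
  have "set_lebesgue_integral M B (\<lambda>x. measure (return borel (f x)) F)
      = integral\<^sup>L M (indicator (B \<inter> {x. f x \<in> F}))"
    unfolding set_lebesgue_integral_def using F
    by (intro Bochner_Integration.integral_cong) (auto simp: measure_return indicator_def)
  also have "\<dots> = measure M (B \<inter> {x. f x \<in> F})" by (simp add: spM)
  finally show "measure (graph_meas M f) (B \<times> F) = set_lebesgue_integral M B (\<lambda>x. measure (return borel (f x)) F)"
    using graph_rect[OF B F] by simp
qed

end



lemma kernel_ae:
  assumes PM: "prob_space M" and sM: "sets M = sets borel" and K: "markov_kernel_of M C K"
    and F: "F \<in> sets borel" and S: "S \<in> sets borel"
    and rect: "\<And>B. B \<in> sets borel \<Longrightarrow> measure C (B \<times> F) = measure M (B \<inter> S)"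
  shows "AE x in M. measure (K x) F = indicator S x"
proof -
  interpret prob_space M by fact
  define h where "h x = measure (K x) F" for x
  have hi: "integrable M h" unfolding h_def by (rule kernel_integrable[OF PM sM K F])
  have hb: "0 \<le> h x" "h x \<le> 1" for x unfolding h_def using kernel_bounds[OF K] by auto
  have SM: "S \<in> sets M" using S sM by simp
  have cS: "- S \<in> sets borel" using S by (rule borel_comp)
  have cSM: "- S \<in> sets M" using cS sM by simp
  have spM: "space M = UNIV" using sM by (metis sets_eq_imp_space_eq space_borel)
  have kd: "\<And>B. B \<in> sets borel \<Longrightarrow> measure C (B \<times> F) = integral\<^sup>L M (\<lambda>x. indicator B x * h x)"
    using K F unfolding markov_kernel_of_def set_lebesgue_integral_def h_def by simp
  have i1: "integral\<^sup>L M (\<lambda>x. indicator S x * h x) = measure M S"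
    using kd[OF S] rect[OF S] by simp
  have i2: "integral\<^sup>L M (\<lambda>x. indicator (- S) x * h x) = 0"
    using kd[OF cS] rect[OF cS] by simp
  have int1: "integrable M (\<lambda>x. indicator S x * h x)"
    using integrable_real_mult_indicator[OF SM hi] by (simp add: mult.commute)
  have int2: "integrable M (\<lambda>x. indicator (- S) x * h x)"
    using integrable_real_mult_indicator[OF cSM hi] by (simp add: mult.commute)
  have intS: "integrable M (indicator S :: _ \<Rightarrow> real)" by (rule integrable_real_indicator[OF SM]) (simp add: emeasure_eq_measure)
  have "integral\<^sup>L M (\<lambda>x. indicator S x - indicator S x * h x) = 0"
    using i1 int1 intS SM by (simp add: spM)
  moreover have "integrable M (\<lambda>x. indicator S x - indicator S x * h x)"
    using int1 intS by simp
  moreover have "AE x in M. 0 \<le> indicator S x - indicator S x * h x"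
    using hb by (auto simp: indicator_def)
  ultimately have ae1: "AE x in M. indicator S x - indicator S x * h x = 0"
    using integral_nonneg_eq_0_iff_AE by blast
  have "AE x in M. 0 \<le> indicator (- S) x * h x"
    using hb by (auto simp: indicator_def)
  then have ae2: "AE x in M. indicator (- S) x * h x = 0"
    using integral_nonneg_eq_0_iff_AE[OF int2] i2 by blast
  show ?thesis using ae1 ae2 unfolding h_def[symmetric]
    by eventually_elim (auto simp: indicator_def split: if_splits)
qed

lemma sharp_phi:
  fixes M :: "(real^'n) measure"
  assumes A: "copula_meas M" and p: "1 \<le> p"
    and K1: "markov_kernel_of M (graph_meas M (\<lambda>x. x $ i)) K1"
    and K2: "markov_kernel_of M (graph_meas M (\<lambda>x. 1 - x $ i)) K2"
    and y: "y \<in> {0..1}"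
  shows "Phi M K1 K2 p y = 2 * min y (1 - y)"
proof -
  have PM: "prob_space M" and sM: "sets M = sets borel" and spM: "space M = UNIV"
    using cop_basic[OF A] by auto
  interpret prob_space M by fact
  interpret G1: graphloc M "\<lambda>x. x $ i"
    by unfold_locales (auto intro: A continuous_intros cop_basic(4)[OF A])
  have u2: "measure M {x. 1 - x $ i \<le> t} = t" if "t \<in> {0..1}" for t
  proof -
    have "{x. 1 - x $ i \<le> t} = {x. 1 - t \<le> x $ i}" by auto
    then show ?thesis using cop_ge[OF A, of "1 - t" i] that by simp
  qed
  have c2: "continuous_on UNIV (\<lambda>x::real^'n. 1 - x $ i)" by (intro continuous_intros)
  interpret G2: graphloc M "\<lambda>x. 1 - x $ i"
    by unfold_locales (auto intro: A c2 u2)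
  define S1 where "S1 = {x::real^'n. x $ i \<in> {0..y}}"
  define S2 where "S2 = {x::real^'n. 1 - x $ i \<in> {0..y}}"
  have S1b: "S1 \<in> sets borel" unfolding S1_def atLeastAtMost_iff mem_Collect_eq
    by (intro borel_closed closed_Collect_conj closed_Collect_le continuous_intros) 
  have S2b: "S2 \<in> sets borel" unfolding S2_def atLeastAtMost_iff mem_Collect_eq
    by (intro borel_closed closed_Collect_conj closed_Collect_le continuous_intros)
  have Fb: "{0..y} \<in> sets borel" by simp
  have ae1: "AE x in M. measure (K1 x) {0..y} = indicator S1 x"
    by (rule kernel_ae[OF PM sM K1 Fb S1b]) (simp add: G1.graph_rect S1_def)
  have ae2: "AE x in M. measure (K2 x) {0..y} = indicator S2 x"
    by (rule kernel_ae[OF PM sM K2 Fb S2b]) (simp add: G2.graph_rect S2_def)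
  have S1M: "S1 \<in> sets M" and S2M: "S2 \<in> sets M" using S1b S2b sM by auto
  have m1: "measure M S1 = y"
  proof -
    have "integral\<^sup>L M (\<lambda>x. measure (K1 x) {0..y}) = integral\<^sup>L M (indicator S1)"
      using ae1 by (rule integral_cong_AE[rotated 2]) (auto intro: kernel_meas[OF sM K1] borel_measurable_indicator simp: S1M)
    then show ?thesis using kernel_integral[OF PM sM G1.graph_dcop K1] y S1M by (simp add: spM)
  qed
  have m2: "measure M S2 = y"
  proof -
    have "integral\<^sup>L M (\<lambda>x. measure (K2 x) {0..y}) = integral\<^sup>L M (indicator S2)"
      using ae2 by (rule integral_cong_AE[rotated 2]) (auto intro: kernel_meas[OF sM K2] borel_measurable_indicator simp: S2M)
    then show ?thesis using kernel_integral[OF PM sM G2.graph_dcop K2] y S2M by (simp add: spM)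
  qed
  have m12: "measure M (S1 \<inter> S2) = max 0 (2 * y - 1)"
  proof (cases "y < 1/2")
    case True
    then have "S1 \<inter> S2 = {}" unfolding S1_def S2_def by auto
    then show ?thesis using True by simp
  next
    case False
    have lt: "{x::real^'n. x $ i < 1 - y} \<in> sets M" unfolding sM
      by (intro borel_open open_Collect_less continuous_intros)
    have le: "{x::real^'n. x $ i \<le> y} \<in> sets M" unfolding sM
      by (intro borel_closed closed_Collect_le continuous_intros)
    have sub: "{x::real^'n. x $ i < 1 - y} \<subseteq> {x. x $ i \<le> y}" using False by auto
    have "S1 \<inter> S2 = {x. x $ i \<le> y} - {x. x $ i < 1 - y}" unfolding S1_def S2_def using False y by auto
    then have "measure M (S1 \<inter> S2) = y - (1 - y)"
      using finite_measure_Diff[OF le lt sub] cop_lt[OF A, of "1 - y" i] cop_basic(4)[OF A y, of i] y by simp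
    then show ?thesis using False by simp
  qed
  have "Phi M K1 K2 p y = integral\<^sup>L M (\<lambda>x. \<bar>indicator S1 x - indicator S2 x\<bar> powr p)"
  proof -
    have meas: "(\<lambda>x. \<bar>measure (K1 x) {0..y} - measure (K2 x) {0..y}\<bar> powr p) \<in> borel_measurable M"
      using kernel_meas[OF sM K1 Fb] kernel_meas[OF sM K2 Fb] by measurable
    have meas2: "(\<lambda>x. \<bar>indicator S1 x - indicator S2 x\<bar> powr p :: real) \<in> borel_measurable M"
      using S1M S2M by measurable
    show ?thesis unfolding Phi_def
      by (rule integral_cong_AE[OF meas meas2]) (use ae1 ae2 in eventually_elim, simp)
  qed
  also have "\<dots> = integral\<^sup>L M (\<lambda>x. indicator S1 x + indicator S2 x - 2 * indicator (S1 \<inter> S2) x)"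
    using p by (intro Bochner_Integration.integral_cong) (auto simp: indicator_def)
  also have "\<dots> = measure M S1 + measure M S2 - 2 * measure M (S1 \<inter> S2)"
  proof -
    have S12M: "S1 \<inter> S2 \<in> sets M" using S1M S2M by auto
    have i: "integrable M (indicator T :: _ \<Rightarrow> real)" if "T \<in> sets M" for T
      by (rule integrable_real_indicator[OF that]) (simp add: emeasure_eq_measure)
    show ?thesis
      using i[OF S1M] i[OF S2M] i[OF S12M] S1M S2M S12M
      by (simp add: Bochner_Integration.integral_diff Bochner_Integration.integral_add spM)
  qed
  also have "\<dots> = 2 * min y (1 - y)" using m1 m2 m12 y unfolding min_def max_def by auto
  finally show ?thesis .
qed




lemma g1loc: "copula_meas M \<Longrightarrow> graphloc M (\<lambda>x. x $ i)"
  by unfold_locales (auto intro: continuous_intros cop_basic(4))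

lemma g2loc:
  fixes M :: "(real^'n) measure"
  assumes A: "copula_meas M" shows "graphloc M (\<lambda>x. 1 - x $ i)"
proof -
  have u2: "measure M {x. 1 - x $ i \<le> t} = t" if "t \<in> {0..1}" for t
  proof -
    have "{x. 1 - x $ i \<le> t} = {x. 1 - t \<le> x $ i}" by auto
    then show ?thesis using cop_ge[OF A, of "1 - t" i] that by simp
  qed
  have c2: "continuous_on UNIV (\<lambda>x::real^'n. 1 - x $ i)" by (intro continuous_intros)
  show ?thesis by unfold_locales (auto intro: A c2 u2)
qed

theorem lemma17:
  fixes \<mu>A :: "(real^'n) measure" and p :: real
  assumes A: "copula_meas \<mu>A" and p: "1 \<le> p"
  shows
    "(\<forall>C1\<in>copulas_with_marginal \<mu>A. \<forall>C2\<in>copulas_with_marginal \<mu>A. \<forall>K1 K2.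
        markov_kernel_of \<mu>A C1 K1 \<longrightarrow> markov_kernel_of \<mu>A C2 K2 \<longrightarrow>
          Phi \<mu>A K1 K2 p 0 = 0 \<and> Phi \<mu>A K1 K2 p 1 = 0 \<and>
          continuous_on {0..1} (Phi \<mu>A K1 K2 p) \<and>
          (p = 1 \<longrightarrow> 2-lipschitz_on {0..1} (Phi \<mu>A K1 K2 p)) \<and>
          (\<forall>y\<in>{0..1}. Phi \<mu>A K1 K2 p y \<le> 2 * min y (1 - y)) \<and>
          Dp \<mu>A K1 K2 p \<le> 2 powr (- 1 / p))
   \<and> (\<exists>C1\<in>copulas_with_marginal \<mu>A. \<exists>C2\<in>copulas_with_marginal \<mu>A.
        (\<exists>K1 K2. markov_kernel_of \<mu>A C1 K1 \<and> markov_kernel_of \<mu>A C2 K2) \<and>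
        (\<forall>K1 K2. markov_kernel_of \<mu>A C1 K1 \<longrightarrow> markov_kernel_of \<mu>A C2 K2 \<longrightarrow>
           (\<forall>y\<in>{0..1}. Phi \<mu>A K1 K2 p y = 2 * min y (1 - y))))
   \<and> (\<exists>C1\<in>copulas_with_marginal \<mu>A. \<exists>C2\<in>copulas_with_marginal \<mu>A.
        (\<exists>K1 K2. markov_kernel_of \<mu>A C1 K1 \<and> markov_kernel_of \<mu>A C2 K2) \<and>
        (\<forall>K1 K2. markov_kernel_of \<mu>A C1 K1 \<longrightarrow> markov_kernel_of \<mu>A C2 K2 \<longrightarrow>
           Dp \<mu>A K1 K2 p = 2 powr (- 1 / p)))"
proof (intro conjI)
  have PM: "prob_space \<mu>A" and sM: "sets \<mu>A = sets borel" using cop_basic[OF A] by auto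
  show "\<forall>C1\<in>copulas_with_marginal \<mu>A. \<forall>C2\<in>copulas_with_marginal \<mu>A. \<forall>K1 K2.
        markov_kernel_of \<mu>A C1 K1 \<longrightarrow> markov_kernel_of \<mu>A C2 K2 \<longrightarrow>
          Phi \<mu>A K1 K2 p 0 = 0 \<and> Phi \<mu>A K1 K2 p 1 = 0 \<and>
          continuous_on {0..1} (Phi \<mu>A K1 K2 p) \<and>
          (p = 1 \<longrightarrow> 2-lipschitz_on {0..1} (Phi \<mu>A K1 K2 p)) \<and>
          (\<forall>y\<in>{0..1}. Phi \<mu>A K1 K2 p y \<le> 2 * min y (1 - y)) \<and>
          Dp \<mu>A K1 K2 p \<le> 2 powr (- 1 / p)"
  proof (intro ballI allI impI)
    fix C1 C2 K1 K2
    assume C1: "C1 \<in> copulas_with_marginal \<mu>A" and C2: "C2 \<in> copulas_with_marginal \<mu>A"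
      and K1: "markov_kernel_of \<mu>A C1 K1" and K2: "markov_kernel_of \<mu>A C2 K2"
    interpret philoc \<mu>A C1 C2 K1 K2 p
      using PM sM C1 C2 K1 K2 p unfolding copulas_with_marginal_def philoc_def by blast
    have z: "Phi \<mu>A K1 K2 p 0 = 0" using Phi_bound[of 0] by simp
    have o: "Phi \<mu>A K1 K2 p 1 = 0" using Phi_bound[of 1] by simp
    have l: "p = 1 \<longrightarrow> 2-lipschitz_on {0..1} (Phi \<mu>A K1 K2 p)" using Phi_lip by auto
    show "Phi \<mu>A K1 K2 p 0 = 0 \<and> Phi \<mu>A K1 K2 p 1 = 0 \<and>
          continuous_on {0..1} (Phi \<mu>A K1 K2 p) \<and>
          (p = 1 \<longrightarrow> 2-lipschitz_on {0..1} (Phi \<mu>A K1 K2 p)) \<and>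
          (\<forall>y\<in>{0..1}. Phi \<mu>A K1 K2 p y \<le> 2 * min y (1 - y)) \<and>
          Dp \<mu>A K1 K2 p \<le> 2 powr (- 1 / p)"
      using z o l Phi_cont Phi_bound(2) Dp_bound by (intro conjI ballI) auto
  qed
  define i :: 'n where "i = undefined"
  interpret G1: graphloc \<mu>A "\<lambda>x. x $ i" by (rule g1loc[OF A])
  interpret G2: graphloc \<mu>A "\<lambda>x. 1 - x $ i" by (rule g2loc[OF A])
  have ex: "\<exists>K1 K2. markov_kernel_of \<mu>A (graph_meas \<mu>A (\<lambda>x. x $ i)) K1 \<and>
      markov_kernel_of \<mu>A (graph_meas \<mu>A (\<lambda>x. 1 - x $ i)) K2"
    using G1.graph_kernel G2.graph_kernel by blast
  have P2: "\<forall>K1 K2. markov_kernel_of \<mu>A (graph_meas \<mu>A (\<lambda>x. x $ i)) K1 \<longrightarrow>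
        markov_kernel_of \<mu>A (graph_meas \<mu>A (\<lambda>x. 1 - x $ i)) K2 \<longrightarrow>
           (\<forall>y\<in>{0..1}. Phi \<mu>A K1 K2 p y = 2 * min y (1 - y))"
    by (intro allI impI ballI) (rule sharp_phi[OF A p], assumption+)
  show "\<exists>C1\<in>copulas_with_marginal \<mu>A. \<exists>C2\<in>copulas_with_marginal \<mu>A.
        (\<exists>K1 K2. markov_kernel_of \<mu>A C1 K1 \<and> markov_kernel_of \<mu>A C2 K2) \<and>
        (\<forall>K1 K2. markov_kernel_of \<mu>A C1 K1 \<longrightarrow> markov_kernel_of \<mu>A C2 K2 \<longrightarrow>
           (\<forall>y\<in>{0..1}. Phi \<mu>A K1 K2 p y = 2 * min y (1 - y)))"
    using G1.graph_marg G2.graph_marg ex P2 by blast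
  have P3: "\<forall>K1 K2. markov_kernel_of \<mu>A (graph_meas \<mu>A (\<lambda>x. x $ i)) K1 \<longrightarrow>
        markov_kernel_of \<mu>A (graph_meas \<mu>A (\<lambda>x. 1 - x $ i)) K2 \<longrightarrow>
           Dp \<mu>A K1 K2 p = 2 powr (- 1 / p)"
  proof (intro allI impI)
    fix K1 K2
    assume K1: "markov_kernel_of \<mu>A (graph_meas \<mu>A (\<lambda>x. x $ i)) K1"
      and K2: "markov_kernel_of \<mu>A (graph_meas \<mu>A (\<lambda>x. 1 - x $ i)) K2"
    have "set_lebesgue_integral lborel {0..1::real} (Phi \<mu>A K1 K2 p)
        = set_lebesgue_integral lborel {0..1::real} (\<lambda>y. 2 * min y (1 - y))"
      unfolding set_lebesgue_integral_def
      by (intro Bochner_Integration.integral_cong) (auto simp: indicator_def sharp_phi[OF A p K1 K2])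
    then have eq: "set_lebesgue_integral lborel {0..1::real} (Phi \<mu>A K1 K2 p) = 1/2"
      using tent_integral by simp
    show "Dp \<mu>A K1 K2 p = 2 powr (- 1 / p)"
      unfolding Dp_def eq by (rule half_powr[OF p])
  qed
  show "\<exists>C1\<in>copulas_with_marginal \<mu>A. \<exists>C2\<in>copulas_with_marginal \<mu>A.
        (\<exists>K1 K2. markov_kernel_of \<mu>A C1 K1 \<and> markov_kernel_of \<mu>A C2 K2) \<and>
        (\<forall>K1 K2. markov_kernel_of \<mu>A C1 K1 \<longrightarrow> markov_kernel_of \<mu>A C2 K2 \<longrightarrow>
           Dp \<mu>A K1 K2 p = 2 powr (- 1 / p))"
    using G1.graph_marg G2.graph_marg ex P3 by blast
qed


end
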